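(* Let $t\ge4$ be an integer and consider the Markov chain $(\mu_i)_{i\ge0}$ on $\mathbb{R}$ with transition kernel $P$ such that, given $\mu_{i-1}=\mu$, the random variable $\mu_i\left(1+\mu^2/t\right)^{-1/2}$ has the Student t distribution with $t$ degrees of freedom. Let $V^2(\mu)=\mu^2+1$, let $a>\sqrt{t/(t-3)}$ and $J=[-a,a]$. Then $$PV^2(\mu)\le\begin{cases}\lambda^2V^2(\mu)&\text{for }|\mu|>a,\\ K^2&\text{for }|\mu|\le a,\end{cases}$$ where $$\lambda^2=\frac{1}{t-2}\left(\frac{2t-3}{1+a^2}+1\right),\qquad K^2=2+\frac{a^2+2}{t-2}.$$ Moreover, if $\pi$ denotes the probability distribution on $\mathbb{R}$ with density proportional to $(1+\mu^2/t)^{-t/2}$, then $\pi(V^2)=\frac{2t-3}{t-3}$.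
   Context: This chain is the $\mu$-marginal of the two-step Gibbs sampler for the posterior of $(\mu,\kappa)$ in a normal model with prior $p(\mu,\kappa)\propto\kappa^{-1}$, normalized so that the sample mean is $0$ and $s^2=t$: $\kappa_i\sim\mathrm{Gamma}(t/2,\ \text{rate } (t/2)(t+\mu_{i-1}^2))$, then $\mu_i\sim N(0,1/(\kappa_i t))$. Equivalently the transition density is $p(\mu_i\mid\mu_{i-1})\propto(1+\mu_{i-1}^2/t)^{t/2}(1+\mu_{i-1}^2/t+\mu_i^2/t)^{-(t+1)/2}$ with a proportionality constant depending only on $t$. The distribution $\pi$ is its stationary distribution. $PV^2(\mu)=\int P(\mu,dy)V^2(y)$. *)

theory Defs
  imports "HOL-Probability.Probability"
begin

definition student_t_density :: "real \<Rightarrow> real \<Rightarrow> real" where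
  "student_t_density \<nu> x =
     Gamma ((\<nu> + 1) / 2) / (sqrt (\<nu> * pi) * Gamma (\<nu> / 2)) * (1 + x\<^sup>2 / \<nu>) powr (- (\<nu> + 1) / 2)"

definition student_t :: "real \<Rightarrow> real measure" where
  "student_t \<nu> = density lborel (\<lambda>x. ennreal (student_t_density \<nu> x))"

definition kernelP :: "real \<Rightarrow> real \<Rightarrow> real measure" where
  "kernelP t \<mu> = distr (student_t t) lborel (\<lambda>x. sqrt (1 + \<mu>\<^sup>2 / t) * x)"

definition V2 :: "real \<Rightarrow> real" where
  "V2 \<mu> = \<mu>\<^sup>2 + 1"

definition PV2 :: "real \<Rightarrow> real \<Rightarrow> real" where
  "PV2 t \<mu> = integral\<^sup>L (kernelP t \<mu>) V2"

definition pi_dist :: "real \<Rightarrow> real measure" where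
  "pi_dist t = density lborel (\<lambda>m. ennreal ((1 + m\<^sup>2 / t) powr (- t / 2) /
        (\<integral>u. (1 + u\<^sup>2 / t) powr (- t / 2) \<partial>lborel)))"

end

theory Submission imports Defs begin

lemma beta_open:
  fixes a b :: real assumes a: "a > 0" and b: "b > 0"
  shows "(\<lambda>s. s powr (a-1) * (1-s) powr (b-1)) absolutely_integrable_on {0<..<1} \<and>
         integral {0<..<1} (\<lambda>s. s powr (a-1) * (1-s) powr (b-1)) = Beta a b"
proof -
  have h: "((\<lambda>s. s powr (a-1) * (1-s) powr (b-1)) has_integral Beta a b) {0<..<1}"
    using has_integral_Beta_real[OF a b]
    apply (rule has_integral_spike_set_eq[THEN iffD1, rotated 2])
      apply (rule negligible_subset[of "{0,1::real}"]) apply simp apply auto[1]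
     apply (rule negligible_subset[of "{0,1::real}"]) apply simp apply auto[1]
    done
  then show ?thesis
    by (auto intro!: nonnegative_absolutely_integrable_1 simp: integrable_on_def integral_unique)
qed

lemma alg1: "2*w*x/(E::real) * (P/F * (Q/G)) = 2*(w*Q)*(x*P)/(E*F*G)" by (simp add: ac_simps)
lemma alg2: "M \<noteq> 0 \<Longrightarrow> 2*(M*(A::real))*X/(M*T) = 2*A*(X*inverse T)" by (simp add: field_simps)

lemma eq_alg:
  fixes x \<nu> m a b :: real and n :: nat
  assumes x0: "x > 0" and \<nu>: "\<nu> > 0" and a: "a = real n + 1/2" and b: "b = m - a"
  shows "\<bar>2*\<nu>*x/(\<nu>+x\<^sup>2)\<^sup>2\<bar> * ((x\<^sup>2/(\<nu>+x\<^sup>2)) powr (a-1) * (1 - x\<^sup>2/(\<nu>+x\<^sup>2)) powr (b-1))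
         = 2 * \<nu> powr (-a) * (x^(2*n) * (1+x\<^sup>2/\<nu>) powr (-m))"
proof -
  define D where "D = \<nu> + x\<^sup>2"
  have D: "D > 0" using \<nu> by (simp add: D_def add_pos_nonneg)
  have x2: "x\<^sup>2 > 0" using x0 by simp
  have s1: "1 - x\<^sup>2/D = \<nu>/D" using D by (simp add: D_def field_simps)
  have s2: "(x\<^sup>2/D) powr (a-1) = (x\<^sup>2) powr (a-1) / D powr (a-1)"
    using D x2 by (simp add: powr_divide)
  have s3: "(\<nu>/D) powr (b-1) = \<nu> powr (b-1) / D powr (b-1)"
    using D \<nu> by (simp add: powr_divide)
  have s4: "D\<^sup>2 * D powr (a-1) * D powr (b-1) = D powr m"
  proof -
    have q1: "D\<^sup>2 = D powr 2" using D by (simp add: powr_realpow)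
    have q2: "D powr (2 + (a-1) + (b-1)) = D powr 2 * D powr (a-1) * D powr (b-1)"
      by (simp only: powr_add)
    have "D\<^sup>2 * D powr (a-1) * D powr (b-1) = D powr (2 + (a-1) + (b-1))"
      by (simp only: q1 q2)
    also have "2 + (a-1) + (b-1) = m" using b by simp
    finally show ?thesis .
  qed
  have s5: "x * (x\<^sup>2) powr (a-1) = x^(2*n)"
  proof -
    have e1: "x powr 2 = x\<^sup>2" using x0 by (simp add: powr_realpow)
    have "(x\<^sup>2) powr (a-1) = x powr (2*(a-1))"
      unfolding e1[symmetric] by (simp only: powr_powr)
    moreover have "x = x powr 1" using x0 by simp
    ultimately have "x * (x\<^sup>2) powr (a-1) = x powr 1 * x powr (2*(a-1))" by simp
    also have "\<dots> = x powr (1 + 2*(a-1))" by (simp only: powr_add)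
    also have "1 + 2*(a-1) = real (2*n)" using a by simp
    also have "x powr (real (2*n)) = x^(2*n)" using x0 by (simp only: powr_realpow)
    finally show ?thesis .
  qed
  have s6: "D powr m = \<nu> powr m * (1+x\<^sup>2/\<nu>) powr m"
  proof -
    have "D = \<nu> * (1+x\<^sup>2/\<nu>)" using \<nu> by (simp add: D_def field_simps)
    moreover have "(\<nu> * (1+x\<^sup>2/\<nu>)) powr m = \<nu> powr m * (1+x\<^sup>2/\<nu>) powr m"
      using \<nu> by (intro powr_mult)
    ultimately show ?thesis by simp
  qed
  have s7: "\<nu> * \<nu> powr (b-1) = \<nu> powr m * \<nu> powr (-a)"
  proof -
    have "\<nu> * \<nu> powr (b-1) = \<nu> powr 1 * \<nu> powr (b-1)" using \<nu> by simp
    also have "\<dots> = \<nu> powr (1 + (b-1))" by (simp only: powr_add)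
    also have "\<dots> = \<nu> powr (m + -a)" using b by simp
    also have "\<dots> = \<nu> powr m * \<nu> powr (-a)" by (simp only: powr_add)
    finally show ?thesis .
  qed
  have ab: "\<bar>2*\<nu>*x/D\<^sup>2\<bar> = 2*\<nu>*x/D\<^sup>2" using \<nu> x0 D by simp
  have "\<bar>2*\<nu>*x/D\<^sup>2\<bar> * ((x\<^sup>2/D) powr (a-1) * (1 - x\<^sup>2/D) powr (b-1))
      = 2 * (\<nu> * \<nu> powr (b-1)) * (x * (x\<^sup>2) powr (a-1)) / (D\<^sup>2 * D powr (a-1) * D powr (b-1))"
    unfolding ab s1 s2 s3 by (rule alg1)
  also have "\<dots> = 2 * (\<nu> powr m * \<nu> powr (-a)) * x^(2*n) / (\<nu> powr m * (1+x\<^sup>2/\<nu>) powr m)"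
    unfolding s4 s5 s6 s7 ..
  also have "\<dots> = 2 * \<nu> powr (-a) * (x^(2*n) * inverse ((1+x\<^sup>2/\<nu>) powr m))"
    by (rule alg2) (use \<nu> in simp)
  also have "inverse ((1+x\<^sup>2/\<nu>) powr m) = (1+x\<^sup>2/\<nu>) powr (-m)"
    by (simp only: powr_minus)
  finally show ?thesis by (simp add: D_def)
qed

lemma half_line:
  fixes \<nu> m :: real and n :: nat
  assumes \<nu>: "\<nu> > 0" and m: "m > real n + 1/2"
  shows "(\<lambda>x. x^(2*n) * (1+x\<^sup>2/\<nu>) powr (-m)) absolutely_integrable_on {0<..} \<and>
    integral {0<..} (\<lambda>x. x^(2*n) * (1+x\<^sup>2/\<nu>) powr (-m)) =
       \<nu> powr (real n + 1/2) / 2 * Beta (real n + 1/2) (m - real n - 1/2)"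
proof -
  define a where "a = real n + 1/2"
  define b where "b = m - a"
  have a0: "a > 0" and b0: "b > 0" using m by (auto simp: a_def b_def)
  define g where "g x = x\<^sup>2/(\<nu>+x\<^sup>2)" for x::real
  define g' where "g' x = 2*\<nu>*x/(\<nu>+x\<^sup>2)\<^sup>2" for x::real
  define f where "f s = s powr (a-1) * (1-s) powr (b-1)" for s::real
  have pos: "\<nu> + x\<^sup>2 > 0" for x using \<nu> by (simp add: add_pos_nonneg)
  have deriv: "(g has_field_derivative g' x) (at x within {0<..})" if "x \<in> {0<..}" for x
    unfolding g_def g'_def
    using pos[of x] by (auto intro!: derivative_eq_intros simp: field_simps power2_eq_square)
  have inj: "inj_on g {0<..}"
  proof (rule inj_onI)
    fix x y :: real assume x: "x \<in> {0<..}" and y: "y \<in> {0<..}" and e: "g x = g y"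
    from e have "x\<^sup>2 * (\<nu>+y\<^sup>2) = y\<^sup>2 * (\<nu>+x\<^sup>2)"
      using pos[of x] pos[of y] by (simp add: g_def field_simps)
    hence "\<nu> * x\<^sup>2 = \<nu> * y\<^sup>2" by (simp add: algebra_simps)
    hence "x\<^sup>2 = y\<^sup>2" using \<nu> by simp
    thus "x = y" using x y by (simp add: power2_eq_iff_nonneg)
  qed
  have img: "g ` {0<..} = {0<..<1}"
  proof (rule set_eqI, rule iffI)
    fix y assume "y \<in> g ` {0<..}"
    then obtain x :: real where "x > 0" "y = g x" by auto
    thus "y \<in> {0<..<1}" using pos[of x] \<nu> by (auto simp: g_def divide_less_eq)
  next
    fix s :: real assume "s \<in> {0<..<1}"
    hence s: "0 < s" "s < 1" by auto
    define x where "x = sqrt (\<nu> * s / (1 - s))"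
    have x0: "x > 0" using s \<nu> by (simp add: x_def)
    have "x\<^sup>2 = \<nu> * s / (1 - s)" using s \<nu> by (simp add: x_def)
    hence "g x = s" using s \<nu> pos[of x] by (simp add: g_def field_simps)
    thus "s \<in> g ` {0<..}" using x0 by force
  qed
  have L: "{0<..} \<in> sets (lebesgue :: real measure)" by simp
  have cv: "(\<lambda>x. \<bar>g' x\<bar> * f (g x)) absolutely_integrable_on {0<..} \<and>
            integral {0<..} (\<lambda>x. \<bar>g' x\<bar> * f (g x)) = Beta a b"
  proof -
    have "f absolutely_integrable_on g ` {0<..} \<and> integral (g ` {0<..}) f = Beta a b"
      unfolding img f_def[abs_def] by (rule beta_open[OF a0 b0])
    moreover have "((\<lambda>x. \<bar>g' x\<bar> * f (g x)) absolutely_integrable_on {0<..} \<and>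
            integral {0<..} (\<lambda>x. \<bar>g' x\<bar> * f (g x)) = Beta a b) \<longleftrightarrow>
          (f absolutely_integrable_on g ` {0<..} \<and> integral (g ` {0<..}) f = Beta a b)"
      apply (rule has_absolute_integral_change_of_variables_1')
        apply (rule L) apply (erule deriv) apply (rule inj) done
    ultimately show ?thesis by (rule rev_iffD2)
  qed
  have eq: "\<bar>g' x\<bar> * f (g x) = 2 * \<nu> powr (-a) * (x^(2*n) * (1+x\<^sup>2/\<nu>) powr (-m))"
    if x: "x \<in> {0<..}" for x
    using eq_alg[of x \<nu> a n b m] x \<nu> by (simp add: g_def g'_def f_def a_def b_def)
  define C where "C = 2 * \<nu> powr (-a)"
  have C: "C > 0" using \<nu> by (simp add: C_def)
  have h1: "((\<lambda>x. \<bar>g' x\<bar> * f (g x)) has_integral Beta a b) {0<..}"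
    using cv set_lebesgue_integral_eq_integral(1)[of "{0<..}" "\<lambda>x. \<bar>g' x\<bar> * f (g x)"]
    by (metis integrable_integral)
  have h2: "((\<lambda>x. inverse C * (\<bar>g' x\<bar> * f (g x))) has_integral inverse C * Beta a b) {0<..}"
    by (rule has_integral_mult_right[OF h1])
  have h3: "((\<lambda>x. x^(2*n) * (1+x\<^sup>2/\<nu>) powr (-m)) has_integral inverse C * Beta a b) {0<..}"
    using h2 by (rule has_integral_cong[THEN iffD1, rotated]) (use eq C in \<open>simp add: C_def\<close>)
  have val: "inverse C * Beta a b = \<nu> powr (real n + 1/2) / 2 * Beta (real n + 1/2) (m - real n - 1/2)"
  proof -
    have "inverse C = \<nu> powr a / 2" unfolding C_def powr_minus by simp
    moreover have "b = m - real n - 1/2" by (simp add: b_def a_def)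
    ultimately show ?thesis by (simp add: a_def)
  qed
  show ?thesis
    using h3 unfolding val
    by (auto intro!: nonnegative_absolutely_integrable_1 simp: integrable_on_def integral_unique)
qed

lemma H_meas: "(\<lambda>x::real. x^(2*n) * (1+x\<^sup>2/\<nu>) powr (-m)) \<in> borel_measurable borel"
  by measurable

lemma full_line:
  fixes \<nu> m :: real and n :: nat
  assumes \<nu>: "\<nu> > 0" and m: "m > real n + 1/2"
  shows "integrable lborel (\<lambda>x. x^(2*n) * (1+x\<^sup>2/\<nu>) powr (-m)) \<and>
    integral\<^sup>L lborel (\<lambda>x. x^(2*n) * (1+x\<^sup>2/\<nu>) powr (-m)) =
       \<nu> powr (real n + 1/2) * Beta (real n + 1/2) (m - real n - 1/2)"
proof -
  define H where "H x = x^(2*n) * (1+x\<^sup>2/\<nu>) powr (-m)" for x :: real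
  define I where "I = \<nu> powr (real n + 1/2) / 2 * Beta (real n + 1/2) (m - real n - 1/2)"
  have hl: "H absolutely_integrable_on {0<..} \<and> integral {0<..} H = I"
    using half_line[OF \<nu> m] by (simp add: H_def[abs_def] I_def)
  have even: "H (-x) = H x" for x by (simp add: H_def power_mult)
  have L: "{..<0} \<in> sets (lebesgue :: real measure)" by simp
  have img: "uminus ` {..<0::real} = {0<..}"
    by (auto simp: image_iff intro!: bexI[of _ "- x" for x])
  have "((\<lambda>x. \<bar>-1\<bar> * H (- x)) absolutely_integrable_on {..<0} \<and>
            integral {..<0} (\<lambda>x. \<bar>-1\<bar> * H (- x)) = I) \<longleftrightarrow>
          (H absolutely_integrable_on uminus ` {..<0} \<and> integral (uminus ` {..<0}) H = I)"
    apply (rule has_absolute_integral_change_of_variables_1')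
      apply (rule L) apply (auto intro!: derivative_eq_intros) done
  hence hr: "H absolutely_integrable_on {..<0} \<and> integral {..<0} H = I"
    using hl unfolding img even by simp
  have i1: "(H has_integral I) {0<..}" using hl set_lebesgue_integral_eq_integral(1)[of "{0<..}" H]
    by (metis integrable_integral)
  have i2: "(H has_integral I) {..<0}" using hr set_lebesgue_integral_eq_integral(1)[of "{..<0}" H]
    by (metis integrable_integral)
  have "(H has_integral (I + I)) ({0<..} \<union> {..<0})"
  proof (rule has_integral_Un[OF i1 i2])
    have "{0<..} \<inter> {..<0::real} = {}" by auto
    thus "negligible ({0<..} \<inter> {..<0::real})" by simp
  qed
  hence iU: "(H has_integral (I + I)) UNIV"
    apply (rule has_integral_spike_set_eq[THEN iffD1, rotated 2])
     apply (rule negligible_subset[of "{0::real}"]) apply simp apply auto[1]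
    apply (rule negligible_subset[of "{0::real}"]) apply simp apply auto[1]
    done
  have nn: "0 \<le> H x" for x by (simp add: H_def)
  have meas: "H \<in> borel_measurable borel" unfolding H_def by measurable
  have N: "integral\<^sup>N lborel H = ennreal (I + I)"
    by (rule nn_integral_has_integral_lborel[OF meas nn iU])
  have int: "integrable lborel H"
    by (rule integrableI_nonneg) (use meas nn N in auto)
  have "integral\<^sup>L lborel H = I + I"
    using has_integral_integral_real[OF int] iU by (rule has_integral_unique)
  thus ?thesis using int by (simp add: H_def[abs_def] I_def)
qed

lemma Gamma_plus1_pos: "(z::real) > 0 \<Longrightarrow> Gamma (z + 1) = z * Gamma z"
  by (rule Gamma_plus1) (auto dest: nonpos_Ints_nonpos)

lemma beta_shift:
  fixes y :: real assumes y: "y > 1"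
  shows "Beta (3/2) (y-1) = Beta (1/2) y / (2*(y-1))"
proof -
  have g1: "Gamma (3/2::real) = 1/2 * Gamma (1/2)"
    using Gamma_plus1_pos[of "1/2"] by simp
  have g2: "Gamma y = (y-1) * Gamma (y-1)"
    using Gamma_plus1_pos[of "y-1"] y by simp
  have e: "3/2 + (y-1) = 1/2 + y" by simp
  have p1: "Gamma (y-1) > 0" "Gamma (1/2 + y) > 0" "Gamma (1/2::real) > 0" using y by auto
  have alg: "(1/2*P)*Q/C = P*((y-1)*Q)/C/(2*(y-1))" if "C \<noteq> 0" for P Q C :: real
    using that y by (simp add: field_simps)
  show ?thesis unfolding Beta_def e g1 g2 by (rule alg) (use p1 in simp)
qed

lemma Beta_pos: "(a::real) > 0 \<Longrightarrow> b > 0 \<Longrightarrow> Beta a b > 0"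
  by (simp add: Beta_def)

lemma student_moments:
  fixes T :: real assumes T: "T > 2"
  shows "integrable lborel (student_t_density T)"
    "integral\<^sup>L lborel (student_t_density T) = 1"
    "integrable lborel (\<lambda>x. x\<^sup>2 * student_t_density T x)"
    "integral\<^sup>L lborel (\<lambda>x. x\<^sup>2 * student_t_density T x) = T / (T - 2)"
proof -
  define h where "h x = (1+x\<^sup>2/T) powr (-(T+1)/2)" for x
  define c where "c = Gamma ((T + 1) / 2) / (sqrt (T * pi) * Gamma (T / 2))"
  define B where "B = Beta (1/2) (T/2)"
  have ee: "- ((T + 1) / 2) = (- T - 1) / 2" by (simp add: field_simps)
  have sd: "student_t_density T = (\<lambda>x. c * h x)"
    by (simp add: fun_eq_iff student_t_density_def c_def h_def)
  have f0: "integrable lborel h \<and> integral\<^sup>L lborel h = sqrt T * B"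
  proof -
    have "(\<lambda>x. x^(2*0) * (1+x\<^sup>2/T) powr (-((T+1)/2))) = h"
      by (simp add: fun_eq_iff h_def ee)
    moreover have "(T+1)/2 - real 0 - 1/2 = T/2" by (simp add: field_simps)
    moreover have "T powr (1/2) = sqrt T" using T by (simp add: powr_half_sqrt)
    moreover have "real 0 + 1/2 = 1/2" by simp
    moreover have "integrable lborel (\<lambda>x. x^(2*0) * (1+x\<^sup>2/T) powr (-((T+1)/2))) \<and>
      integral\<^sup>L lborel (\<lambda>x. x^(2*0) * (1+x\<^sup>2/T) powr (-((T+1)/2))) =
       T powr (real 0 + 1/2) * Beta (real 0 + 1/2) ((T+1)/2 - real 0 - 1/2)"
      by (rule full_line) (use T in simp_all)
    ultimately show ?thesis unfolding B_def by (simp only:)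
  qed
  have f1: "integrable lborel (\<lambda>x. x\<^sup>2 * h x) \<and> integral\<^sup>L lborel (\<lambda>x. x\<^sup>2 * h x) = T * sqrt T * (B / (T - 2))"
  proof -
    have "(\<lambda>x. x^(2*1) * (1+x\<^sup>2/T) powr (-((T+1)/2))) = (\<lambda>x. x\<^sup>2 * h x)"
      by (simp add: fun_eq_iff h_def ee)
    moreover have "(T+1)/2 - real 1 - 1/2 = T/2 - 1" by (simp add: field_simps)
    moreover have "real 1 + 1/2 = 3/2" by simp
    moreover have "T powr (3/2) = T * sqrt T" using T
      by (simp add: powr_add[of T 1 "1/2", simplified] powr_half_sqrt)
    moreover have "Beta (3/2) (T/2 - 1) = B / (T - 2)"
      using beta_shift[of "T/2"] T by (simp add: B_def)
    moreover have "integrable lborel (\<lambda>x. x^(2*1) * (1+x\<^sup>2/T) powr (-((T+1)/2))) \<and>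
      integral\<^sup>L lborel (\<lambda>x. x^(2*1) * (1+x\<^sup>2/T) powr (-((T+1)/2))) =
       T powr (real 1 + 1/2) * Beta (real 1 + 1/2) ((T+1)/2 - real 1 - 1/2)"
      by (rule full_line) (use T in simp_all)
    ultimately show ?thesis by (simp only:)
  qed
  have cB: "c * (sqrt T * B) = 1"
  proof -
    have e1: "B = sqrt pi * Gamma (T/2) / Gamma ((T+1)/2)"
      by (simp add: B_def Beta_def Gamma_one_half_real add_divide_distrib add.commute)
    have e2: "sqrt (T * pi) = sqrt T * sqrt pi" by (simp add: real_sqrt_mult)
    have q1: "Gamma (T/2) > 0" by (rule Gamma_real_pos) (use T in simp)
    have q2: "Gamma ((T+1)/2) > 0" by (rule Gamma_real_pos) (use T in simp)
    have p1: "Gamma (T/2) \<noteq> 0" using q1 by linarith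
    have p2: "Gamma ((T+1)/2) \<noteq> 0" using q2 by linarith
    have p3: "sqrt T \<noteq> 0" "sqrt pi \<noteq> 0" using T by auto
    have alg: "G1 / (sT * sP * G2) * (sT * (sP * G2 / G1)) = 1"
      if "G1 \<noteq> 0" "G2 \<noteq> 0" "sT \<noteq> 0" "sP \<noteq> 0" for G1 G2 sT sP :: real
      using that by (simp add: field_simps)
    show ?thesis unfolding c_def e1 e2 by (rule alg[OF p2 p1 p3])
  qed
  show "integrable lborel (student_t_density T)" unfolding sd using f0 by simp
  show "integral\<^sup>L lborel (student_t_density T) = 1" unfolding sd using f0 cB by simp
  show "integrable lborel (\<lambda>x. x\<^sup>2 * student_t_density T x)" unfolding sd using f1
    by (simp add: mult.left_commute[of _ c])
  have "integral\<^sup>L lborel (\<lambda>x. x\<^sup>2 * student_t_density T x) = c * (T * sqrt T * (B / (T - 2)))"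
    unfolding sd using f1 by (simp add: mult.left_commute[of _ c])
  also have "\<dots> = T * (c * (sqrt T * B)) / (T - 2)" by (simp add: field_simps)
  finally show "integral\<^sup>L lborel (\<lambda>x. x\<^sup>2 * student_t_density T x) = T / (T - 2)"
    using cB by simp
qed

lemma pi_moments:
  fixes T :: real assumes T: "T > 3"
  defines "B \<equiv> Beta (1/2) (T/2 - 1/2)"
  shows "integrable lborel (\<lambda>u. (1 + u\<^sup>2 / T) powr (- T / 2))"
    "integral\<^sup>L lborel (\<lambda>u. (1 + u\<^sup>2 / T) powr (- T / 2)) = sqrt T * B"
    "integrable lborel (\<lambda>u. u\<^sup>2 * (1 + u\<^sup>2 / T) powr (- T / 2))"
    "integral\<^sup>L lborel (\<lambda>u. u\<^sup>2 * (1 + u\<^sup>2 / T) powr (- T / 2)) = T * sqrt T * (B / (T - 3))"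
    "B > 0"
proof -
  have ee: "- (T / 2) = - T / 2" by simp
  have f0: "integrable lborel (\<lambda>u. (1 + u\<^sup>2 / T) powr (- T / 2)) \<and>
     integral\<^sup>L lborel (\<lambda>u. (1 + u\<^sup>2 / T) powr (- T / 2)) = sqrt T * B"
  proof -
    have "(\<lambda>x. x^(2*0) * (1+x\<^sup>2/T) powr (-(T/2))) = (\<lambda>u. (1 + u\<^sup>2 / T) powr (- T / 2))"
      by (simp add: fun_eq_iff)
    moreover have "T/2 - real 0 - 1/2 = T/2 - 1/2" by simp
    moreover have "T powr (1/2) = sqrt T" using T by (simp add: powr_half_sqrt)
    moreover have "real 0 + 1/2 = 1/2" by simp
    moreover have "integrable lborel (\<lambda>x. x^(2*0) * (1+x\<^sup>2/T) powr (-(T/2))) \<and>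
      integral\<^sup>L lborel (\<lambda>x. x^(2*0) * (1+x\<^sup>2/T) powr (-(T/2))) =
       T powr (real 0 + 1/2) * Beta (real 0 + 1/2) (T/2 - real 0 - 1/2)"
      by (rule full_line) (use T in simp_all)
    ultimately show ?thesis unfolding B_def by (simp only:)
  qed
  have f1: "integrable lborel (\<lambda>u. u\<^sup>2 * (1 + u\<^sup>2 / T) powr (- T / 2)) \<and>
     integral\<^sup>L lborel (\<lambda>u. u\<^sup>2 * (1 + u\<^sup>2 / T) powr (- T / 2)) = T * sqrt T * (B / (T - 3))"
  proof -
    have "(\<lambda>x. x^(2*1) * (1+x\<^sup>2/T) powr (-(T/2))) = (\<lambda>u. u\<^sup>2 * (1 + u\<^sup>2 / T) powr (- T / 2))"
      by (simp add: fun_eq_iff)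
    moreover have "T/2 - real 1 - 1/2 = (T/2 - 1/2) - 1" by simp
    moreover have "real 1 + 1/2 = 3/2" by simp
    moreover have "T powr (3/2) = T * sqrt T" using T
      by (simp add: powr_add[of T 1 "1/2", simplified] powr_half_sqrt)
    moreover have "Beta (3/2) ((T/2 - 1/2) - 1) = B / (T - 3)"
      using beta_shift[of "T/2 - 1/2"] T by (simp add: B_def field_simps)
    moreover have "integrable lborel (\<lambda>x. x^(2*1) * (1+x\<^sup>2/T) powr (-(T/2))) \<and>
      integral\<^sup>L lborel (\<lambda>x. x^(2*1) * (1+x\<^sup>2/T) powr (-(T/2))) =
       T powr (real 1 + 1/2) * Beta (real 1 + 1/2) (T/2 - real 1 - 1/2)"
      by (rule full_line) (use T in simp_all)
    ultimately show ?thesis by (simp only:)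
  qed
  show "B > 0" unfolding B_def by (rule Beta_pos) (use T in auto)
  show "integrable lborel (\<lambda>u. (1 + u\<^sup>2 / T) powr (- T / 2))" using f0 by simp
  show "integral\<^sup>L lborel (\<lambda>u. (1 + u\<^sup>2 / T) powr (- T / 2)) = sqrt T * B" using f0 by simp
  show "integrable lborel (\<lambda>u. u\<^sup>2 * (1 + u\<^sup>2 / T) powr (- T / 2))" using f1 by simp
  show "integral\<^sup>L lborel (\<lambda>u. u\<^sup>2 * (1 + u\<^sup>2 / T) powr (- T / 2)) = T * sqrt T * (B / (T - 3))"
    using f1 by simp
qed

lemma sd_nonneg: "T > 0 \<Longrightarrow> 0 \<le> student_t_density T x"
  unfolding student_t_density_def
  by (intro mult_nonneg_nonneg divide_nonneg_nonneg) (auto intro: less_imp_le)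

lemma sd_meas: "student_t_density T \<in> borel_measurable lborel"
  unfolding student_t_density_def[abs_def] by measurable

lemma kernel_facts:
  fixes T \<mu> :: real assumes T: "T > 2"
  shows "integrable (kernelP T \<mu>) V2" "PV2 T \<mu> = (T + \<mu>\<^sup>2) / (T - 2) + 1"
proof -
  define s where "s = sqrt (1 + \<mu>\<^sup>2 / T)"
  have s2: "s\<^sup>2 = 1 + \<mu>\<^sup>2 / T" using T by (simp add: s_def add_nonneg_nonneg)
  have mX: "(\<lambda>x. s * x) \<in> measurable (student_t T) lborel"
    unfolding student_t_def by simp
  have mV: "V2 \<in> borel_measurable lborel" unfolding V2_def[abs_def] by measurable
  have K: "kernelP T \<mu> = distr (student_t T) lborel (\<lambda>x. s * x)"
    by (simp add: kernelP_def s_def)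
  have eqf: "(\<lambda>x. student_t_density T x *\<^sub>R V2 (s * x)) =
      (\<lambda>x. s\<^sup>2 * (x\<^sup>2 * student_t_density T x) + student_t_density T x)"
    by (simp add: fun_eq_iff V2_def power_mult_distrib algebra_simps)
  have mV': "(\<lambda>x. V2 (s * x)) \<in> borel_measurable lborel" unfolding V2_def by measurable
  have i0: "integrable lborel (\<lambda>x. s\<^sup>2 * (x\<^sup>2 * student_t_density T x) + student_t_density T x)"
    using student_moments(1,3)[OF T] by auto
  have int1: "integrable (student_t T) (\<lambda>x. V2 (s * x))"
    unfolding student_t_def
    by (subst integrable_density) (use mV' sd_meas sd_nonneg T i0 eqf in auto)
  show "integrable (kernelP T \<mu>) V2"
    unfolding K by (subst integrable_distr_eq[OF mX mV]) (rule int1)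
  have "PV2 T \<mu> = integral\<^sup>L (student_t T) (\<lambda>x. V2 (s * x))"
    unfolding PV2_def K by (rule integral_distr[OF mX mV])
  also have "\<dots> = integral\<^sup>L lborel (\<lambda>x. student_t_density T x *\<^sub>R V2 (s * x))"
    unfolding student_t_def
    by (rule integral_density) (use mV' sd_meas sd_nonneg T in auto)
  also have "\<dots> = s\<^sup>2 * (T / (T - 2)) + 1"
    unfolding eqf using student_moments[OF T] by simp
  also have "\<dots> = (T + \<mu>\<^sup>2) / (T - 2) + 1"
    unfolding s2 using T by (simp add: field_simps)
  finally show "PV2 T \<mu> = (T + \<mu>\<^sup>2) / (T - 2) + 1" .
qed

lemma pi_facts:
  fixes T :: real assumes T: "T > 3"
  shows "prob_space (pi_dist T)" "integrable (pi_dist T) V2"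
    "integral\<^sup>L (pi_dist T) V2 = (2 * T - 3) / (T - 3)"
proof -
  define h where "h u = (1 + u\<^sup>2 / T) powr (- T / 2)" for u
  define Z where "Z = integral\<^sup>L lborel h"
  define B where "B = Beta (1/2) (T/2 - 1/2)"
  note pm = pi_moments[OF T, folded B_def]
  have Z: "Z = sqrt T * B" using pm(2) by (simp add: Z_def h_def[abs_def])
  have Zp: "Z > 0" unfolding Z using pm(5) T by simp
  have hi: "integrable lborel h" using pm(1) by (simp add: h_def[abs_def])
  have h2i: "integrable lborel (\<lambda>u. u\<^sup>2 * h u)" using pm(3) by (simp add: h_def[abs_def])
  have h2v: "integral\<^sup>L lborel (\<lambda>u. u\<^sup>2 * h u) = T * sqrt T * (B / (T - 3))"
    using pm(4) by (simp add: h_def[abs_def])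
  have hn: "0 \<le> h u" for u by (simp add: h_def)
  have hm: "h \<in> borel_measurable lborel" unfolding h_def[abs_def] by measurable
  have PD: "pi_dist T = density lborel (\<lambda>m. ennreal (h m / Z))"
    by (simp add: pi_dist_def h_def[abs_def] Z_def)
  have gm: "(\<lambda>m. h m / Z) \<in> borel_measurable lborel" using hm by measurable
  have gn: "0 \<le> h m / Z" for m using hn Zp by simp
  show "prob_space (pi_dist T)"
  proof (rule prob_spaceI)
    have "emeasure (pi_dist T) (space (pi_dist T)) = (\<integral>\<^sup>+x. ennreal (h x / Z) \<partial>lborel)"
      unfolding PD using gm by (subst emeasure_density) auto
    also have "\<dots> = ennreal (integral\<^sup>L lborel (\<lambda>x. h x / Z))"
      by (rule nn_integral_eq_integral) (use hi gn in auto)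
    also have "integral\<^sup>L lborel (\<lambda>x. h x / Z) = 1" using Zp by (simp add: Z_def)
    finally show "emeasure (pi_dist T) (space (pi_dist T)) = 1" by simp
  qed
  have mV: "V2 \<in> borel_measurable lborel" unfolding V2_def[abs_def] by measurable
  have eqf: "(\<lambda>x. (h x / Z) *\<^sub>R V2 x) = (\<lambda>x. (x\<^sup>2 * h x) / Z + h x / Z)"
    by (simp add: fun_eq_iff V2_def add_divide_distrib algebra_simps)
  have i0: "integrable lborel (\<lambda>x. (x\<^sup>2 * h x) / Z + h x / Z)"
    using hi h2i by auto
  show "integrable (pi_dist T) V2"
    unfolding PD by (subst integrable_density) (use mV gm gn i0 eqf in auto)
  have "integral\<^sup>L (pi_dist T) V2 = integral\<^sup>L lborel (\<lambda>x. (h x / Z) *\<^sub>R V2 x)"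
    unfolding PD by (rule integral_density) (use mV gm gn in auto)
  also have "\<dots> = (T * sqrt T * (B / (T - 3))) / Z + Z / Z"
    unfolding eqf using hi h2i h2v by (simp add: Z_def)
  also have "\<dots> = (2 * T - 3) / (T - 3)"
    unfolding Z using T pm(5) by (simp add: field_simps)
  finally show "integral\<^sup>L (pi_dist T) V2 = (2 * T - 3) / (T - 3)" .
qed

theorem proposition7p1:
  fixes t :: nat and a :: real
  assumes "t \<ge> 4"
    and "a > sqrt (real t / (real t - 3))"
  defines "lam2 \<equiv> (1 / (real t - 2)) * ((2 * real t - 3) / (1 + a\<^sup>2) + 1)"
    and "K2 \<equiv> 2 + (a\<^sup>2 + 2) / (real t - 2)"
  shows "(\<forall>\<mu>. integrable (kernelP (real t) \<mu>) V2)
    \<and> (\<forall>\<mu>. \<bar>\<mu>\<bar> > a \<longrightarrow> PV2 (real t) \<mu> \<le> lam2 * V2 \<mu>)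
    \<and> (\<forall>\<mu>. \<bar>\<mu>\<bar> \<le> a \<longrightarrow> PV2 (real t) \<mu> \<le> K2)
    \<and> prob_space (pi_dist (real t))
    \<and> integrable (pi_dist (real t)) V2
    \<and> integral\<^sup>L (pi_dist (real t)) V2 = (2 * real t - 3) / (real t - 3)"
proof -
  define T where "T = real t"
  have T: "T \<ge> 4" using assms(1) by (simp add: T_def)
  have T2: "T > 2" and T3: "T > 3" using T by auto
  have "sqrt (real t / (real t - 3)) \<ge> 0" using T3 by (simp add: T_def)
  hence a0: "a > 0" using assms(2) by linarith
  have A: "\<forall>\<mu>. \<bar>\<mu>\<bar> > a \<longrightarrow> PV2 T \<mu> \<le> lam2 * V2 \<mu>"
  proof (intro allI impI)
    fix \<mu> :: real assume m: "\<bar>\<mu>\<bar> > a"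
    define u where "u = \<mu>\<^sup>2 + 1"
    define A where "A = 1 + a\<^sup>2"
    have Ap: "A > 0" by (simp add: A_def add_pos_nonneg)
    have "a\<^sup>2 < \<bar>\<mu>\<bar>\<^sup>2" by (rule power_strict_mono) (use m a0 in auto)
    hence "a\<^sup>2 < \<mu>\<^sup>2" by simp
    hence Au: "A \<le> u" by (simp add: A_def u_def)
    have "1 \<le> u / A" using Au Ap by simp
    hence k: "(2*T-3) * 1 \<le> (2*T-3) * (u / A)" using T by (intro mult_left_mono) auto
    have alg2: "(u + c * (u / A)) / D = 1 / D * (c / A + 1) * u" if "A \<noteq> 0" "D \<noteq> 0" for c D :: real
      using that by (simp add: field_simps)
    have lamV: "lam2 * V2 \<mu> = 1 / (T - 2) * ((2*T-3) / A + 1) * u"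
      by (simp add: lam2_def T_def A_def u_def V2_def)
    have alg1: "X / D + 1 = (X + D) / D" if "D \<noteq> 0" for X D :: real
      using that by (simp add: field_simps)
    have "PV2 T \<mu> = (T + \<mu>\<^sup>2) / (T - 2) + 1" by (rule kernel_facts(2)[OF T2])
    also have "\<dots> = ((T + \<mu>\<^sup>2) + (T - 2)) / (T - 2)" by (rule alg1) (use T2 in simp)
    also have "(T + \<mu>\<^sup>2) + (T - 2) = u + (2*T - 3)" by (simp add: u_def)
    finally have "PV2 T \<mu> = (u + (2*T - 3)) / (T - 2)" .
    also have "\<dots> \<le> (u + (2*T-3) * (u / A)) / (T - 2)"
      using k T2 by (intro divide_right_mono) auto
    also have "\<dots> = lam2 * V2 \<mu>"
      unfolding lamV by (rule alg2) (use Ap T2 in auto)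
    finally show "PV2 T \<mu> \<le> lam2 * V2 \<mu>" .
  qed
  have B: "\<forall>\<mu>. \<bar>\<mu>\<bar> \<le> a \<longrightarrow> PV2 T \<mu> \<le> K2"
  proof (intro allI impI)
    fix \<mu> :: real assume m: "\<bar>\<mu>\<bar> \<le> a"
    have "\<bar>\<mu>\<bar>\<^sup>2 \<le> a\<^sup>2" by (rule power_mono) (use m in auto)
    hence "\<mu>\<^sup>2 \<le> a\<^sup>2" by simp
    hence "(T + \<mu>\<^sup>2) / (T - 2) \<le> (T + a\<^sup>2) / (T - 2)" using T2 by (intro divide_right_mono) auto
    also have "(T + a\<^sup>2) / (T - 2) = 1 + (a\<^sup>2 + 2) / (T - 2)" using T2 by (simp add: field_simps)
    finally show "PV2 T \<mu> \<le> K2" using kernel_facts(2)[OF T2, of \<mu>]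
      by (simp add: K2_def T_def[symmetric])
  qed
  show ?thesis
    using A B kernel_facts(1)[OF T2] pi_facts[OF T3] unfolding T_def by auto
qed

end
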